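(* For integers $\alpha\geq 3$, $\beta\geq 9$, $\rho\geq 4$, let $k_\alpha=2^{2\alpha}+2^\alpha+2$, $K_\beta=2^{2\beta+1}+3\cdot 2^{\beta+3}+49$, $\kappa_\rho=2^\rho+2$, and let $\chi(\rho)=1$ if $\rho$ is even and $\chi(\rho)=2$ if $\rho$ is odd. Then $\Gamma(k_\alpha)\geq 3\cdot 2^{2\alpha}-2^\alpha+1$, $\Gamma(K_\beta)\geq 3\cdot 2^{2\beta+1}-2^{\beta-1}+1$, and $\Gamma(\kappa_\rho)\geq 5\cdot 2^{\rho-1}-8\chi(\rho)+1$.
   Context: The Thue–Morse word is $\mathbf t=\mathbf t_1\mathbf t_2\cdots$ where $\mathbf t_i\in\{0,1\}$ has the parity of the number of $1$'s in the binary expansion of $i-1$. For positive integers $\alpha\le\beta$, $\langle\alpha,\beta\rangle=\mathbf t_\alpha\cdots\mathbf t_\beta$. A $k$-anti-power is a word $w_1\cdots w_k$ with $w_1,\dots,w_k$ pairwise distinct words of equal length. $\mathcal F(k)$ is the set of odd positive integers $m$ such that $\langle 1,km\rangle$ is a $k$-anti-power. $\Gamma(k)=\sup\big((2\mathbb Z^+-1)\setminus\mathcal F(k)\big)$. *)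

theory Defs
  imports Main "HOL-Library.Extended_Nat"
begin

fun bitcount :: "nat \<Rightarrow> nat" where
  "bitcount n = (if n = 0 then 0 else n mod 2 + bitcount (n div 2))"

declare bitcount.simps[simp del]

text \<open>Thue--Morse word, 1-indexed: t i = parity of bitcount (i-1), for i \<ge> 1.\<close>
definition tm :: "nat \<Rightarrow> nat" where
  "tm i = bitcount (i - 1) mod 2"

definition tm_factor :: "nat \<Rightarrow> nat \<Rightarrow> nat list" where
  "tm_factor a b = map tm [a..<Suc b]"

definition anti_power :: "nat \<Rightarrow> 'a list \<Rightarrow> bool" where
  "anti_power k w \<longleftrightarrow> (\<exists>n. length w = k * n \<and>
      distinct (map (\<lambda>i. take n (drop (i * n) w)) [0..<k]))"

definition F_set :: "nat \<Rightarrow> nat set" where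
  "F_set k = {m. odd m \<and> 0 < m \<and> anti_power k (tm_factor 1 (k * m))}"

definition Gamma :: "nat \<Rightarrow> enat" where
  "Gamma k = Sup (enat ` {m. odd m \<and> 0 < m \<and> m \<notin> F_set k})"

end

theory Submission
  imports Defs
begin

lemma bc_rec: "bitcount n = n mod 2 + bitcount (n div 2)"
  by (cases "n = 0") (simp_all add: bitcount.simps[of n] bitcount.simps[of 0])

lemma bc_add: "b < 2^s \<Longrightarrow> bitcount (2^s*a + b) = bitcount a + bitcount b"
proof (induction s arbitrary: b)
  case 0 thus ?case by (simp add: bitcount.simps[of 0])
next
  case (Suc s)
  have h1: "(2^Suc s*a + b) mod 2 = b mod 2" by (simp add: mult.assoc)
  have h2: "(2^Suc s*a + b) div 2 = 2^s*a + b div 2" by simp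
  have "b div 2 < 2^s" using Suc.prems by simp
  hence "bitcount (2^s*a + b div 2) = bitcount a + bitcount (b div 2)" by (rule Suc.IH)
  thus ?case using bc_rec[of "2^Suc s*a + b"] bc_rec[of b] h1 h2 by simp
qed

lemma bc_pow_minus1: "bitcount (2^s - 1) = s"
proof (induction s)
  case 0 thus ?case by (simp add: bitcount.simps[of 0])
next
  case (Suc s)
  have "(2::nat)^Suc s - 1 = 2^s*1 + (2^s - 1)" by simp
  moreover have "bitcount (2^s*1 + (2^s - 1)) = bitcount 1 + bitcount (2^s - 1)"
    by (rule bc_add) simp
  moreover have "bitcount 1 = 1" by (simp add: bitcount.simps)
  ultimately show ?case using Suc.IH by simp
qed

lemma bc_nums: "bitcount 1 = 1" "bitcount 2 = 1" "bitcount 3 = 2" "bitcount 4 = 1" "bitcount 5 = 2"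
  "bitcount 46 = 4" "bitcount 47 = 5" "bitcount 48 = 2" "bitcount 49 = 3"
  by (simp_all add: bitcount.simps)

lemma div_range:
  fixes n qz d :: nat
  assumes "0 < d" "qz * d \<le> n" "n < (qz+3)*d"
  shows "\<exists>e<3. n div d = qz + e"
proof -
  have "qz \<le> n div d" using assms
    by (metis div_le_mono nonzero_mult_div_cancel_right not_gr_zero)
  moreover have "n div d < qz+3" using assms by (simp add: less_mult_imp_div_less)
  ultimately show ?thesis by (intro exI[of _ "n div d - qz"]) auto
qed

lemma gamma_ge:
  fixes i j k m s qz :: nat
  assumes ij: "i < j" and jk: "j < k" and js: "j = i + 2^s" and om: "odd m"
    and lo: "qz * 2^s \<le> i*m" and hi: "i*m + m \<le> (qz+3)*2^s"
    and T: "\<And>e. e < 3 \<Longrightarrow> bitcount (qz+e+m) mod 2 = bitcount (qz+e) mod 2"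
  shows "Gamma k \<ge> enat m"
proof -
  have m0: "0 < m" using om by (cases m) auto
  have blk: "bitcount (j*m+x) mod 2 = bitcount (i*m+x) mod 2" if x: "x < m" for x
  proof -
    define n where "n = i*m+x"
    have "j*m+x = n + 2^s*m" unfolding n_def js by (simp add: algebra_simps)
    obtain e where e: "e < 3" "n div 2^s = qz + e"
      using div_range[of "2^s" qz n] lo hi x unfolding n_def by auto
    have nd: "n = 2^s*(n div 2^s) + n mod 2^s" by simp
    have r: "n mod 2^s < 2^s" by simp
    have n2: "2^s*(qz+e) + n mod 2^s = n" using e(2) by (metis div_mult_mod_eq mult.commute)
    have "n + 2^s*m = (2^s*(qz+e) + n mod 2^s) + 2^s*m" by (simp only: n2)
    also have "\<dots> = 2^s*(qz+e+m) + n mod 2^s" by (simp add: algebra_simps)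
    finally have "n + 2^s*m = 2^s*(qz+e+m) + n mod 2^s" .
    hence "bitcount (n + 2^s*m) = bitcount (qz+e+m) + bitcount (n mod 2^s)"
      using bc_add r by simp
    moreover have "bitcount n = bitcount (qz+e) + bitcount (n mod 2^s)"
      using bc_add[OF r, of "qz+e"] nd e by simp
    ultimately show ?thesis using T[OF e(1)] \<open>j*m+x = n + 2^s*m\<close> n_def
      by (metis mod_add_left_eq)
  qed
  define w where "w = tm_factor 1 (k*m)"
  have lw: "length w = k*m" unfolding w_def tm_factor_def by (simp del: upt_Suc)
  have wn: "w ! p = bitcount p mod 2" if "p < k*m" for p
    using that unfolding w_def tm_factor_def tm_def by (simp del: upt_Suc)
  have blk_eq: "take m (drop (a*m) w) = map (\<lambda>x. bitcount (a*m+x) mod 2) [0..<m]"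
    if "a < k" for a
  proof (rule nth_equalityI)
    have "Suc a * m \<le> k*m" using that by (intro mult_le_mono1) simp
    hence "a*m + m \<le> k*m" by simp
    thus "length (take m (drop (a*m) w)) = length (map (\<lambda>x. bitcount (a*m+x) mod 2) [0..<m])"
      using lw by simp
    fix x assume "x < length (take m (drop (a*m) w))"
    hence "x < m" "a*m+x < k*m" using \<open>a*m + m \<le> k*m\<close> lw by auto
    moreover have "drop (a*m) w ! x = w ! (a*m+x)"
      using lw that \<open>a*m+x < k*m\<close> by (intro nth_drop) simp
    ultimately show "take m (drop (a*m) w) ! x = map (\<lambda>x. bitcount (a*m+x) mod 2) [0..<m] ! x"
      using wn by simp
  qed
  have notap: "\<not> anti_power k w"
  proof
    assume "anti_power k w"
    then obtain n where n: "length w = k*n" "distinct (map (\<lambda>i. take n (drop (i * n) w)) [0..<k])"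
      unfolding anti_power_def by blast
    have k0: "0 < k" using jk by simp
    have "n = m" using n(1) lw k0 by simp
    have "take m (drop (i*m) w) = take m (drop (j*m) w)"
      using blk_eq[of i] blk_eq[of j] ij jk blk by simp
    moreover have "i < k" "j < k" using ij jk by auto
    moreover have "inj_on (\<lambda>i. take m (drop (i*m) w)) {0..<k}"
      using n(2) \<open>n = m\<close> by (simp add: distinct_map)
    ultimately have "i = j" by (intro inj_onD[of "\<lambda>i. take m (drop (i*m) w)" "{0..<k}"]) auto
    thus False using ij by simp
  qed
  have "m \<in> {m. odd m \<and> 0 < m \<and> m \<notin> F_set k}"
    using om m0 notap unfolding F_set_def w_def by simp
  thus ?thesis unfolding Gamma_def by (intro Sup_upper imageI)
qed


lemma famA:
  fixes \<alpha> :: nat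
  assumes "\<alpha> \<ge> 3"
  shows "Gamma (2^(2*\<alpha>) + 2^\<alpha> + 2) \<ge> enat (3 * 2^(2*\<alpha>) - 2^\<alpha> + 1)"
proof -
  obtain P :: nat where N: "2^\<alpha> = 8*P+8"
  proof
    have "(2::nat)^\<alpha> = 2^3 * 2^(\<alpha>-3)" using assms by (metis le_add_diff_inverse power_add)
    moreover have "(2::nat)^(\<alpha>-3) \<ge> 1" by simp
    ultimately show "2^\<alpha> = 8*(2^(\<alpha>-3) - 1) + (8::nat)" by (cases "(2::nat)^(\<alpha>-3)") simp_all
  qed
  have NN: "(2::nat)^(2*\<alpha>) = (8*P+8)*(8*P+8)" using N by (simp add: mult_2 power_add)
  have M: "3 * 2^(2*\<alpha>) - 2^\<alpha> + 1 = 192*P*P + 376*P + (185::nat)"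
  proof -
    have "3*((8*P+8)*(8*P+8)) = (192*P*P + 376*P + 184) + (8*P+(8::nat))" by (simp add: algebra_simps)
    thus ?thesis using N NN by simp
  qed
  have K: "2^(2*\<alpha>) + 2^\<alpha> + 2 = (8*P+8)*(8*P+8) + 8*P + (10::nat)" using N NN by simp
  have "Gamma ((8*P+8)*(8*P+8) + 8*P + 10) \<ge> enat (192*P*P + 376*P + 185)"
  proof (rule gamma_ge[where i="8*P+9" and j="8*P+9+2^(2*\<alpha>)" and s="2*\<alpha>" and qz="24*P+26"])
    show "8*P+9 < 8*P+9+2^(2*\<alpha>)" by simp
    show "8*P+9+2^(2*\<alpha>) < (8*P+8)*(8*P+8) + 8*P + 10" using NN by simp
    show "8*P+9+2^(2*\<alpha>) = 8*P+9 + 2^(2*\<alpha>)" by simp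
    show "odd (192*P*P + 376*P + (185::nat))" by simp
    show "(24*P+26) * 2^(2*\<alpha>) \<le> (8*P+9) * (192*P*P + 376*P + 185)"
      using NN by (simp add: algebra_simps)
    show "(8*P+9) * (192*P*P + 376*P + 185) + (192*P*P + 376*P + 185) \<le> (24*P+26+3) * 2^(2*\<alpha>)"
      using NN by (simp add: algebra_simps)
    fix e :: nat assume e: "e < 3"
    have r1: "3+e < (2::nat)^\<alpha>" using N e by simp
    have r2: "2^\<alpha>*2 + (3+e) < (2::nat)^(2*\<alpha>)" using N NN e by (simp add: algebra_simps)
    have eq1: "24*P+26+e+(192*P*P + 376*P + 185) = 2^(2*\<alpha>)*3 + (2^\<alpha>*2 + (3+e))"
      using N NN by (simp add: algebra_simps)
    have "bitcount (24*P+26+e+(192*P*P + 376*P + 185)) = bitcount (2^(2*\<alpha>)*3 + (2^\<alpha>*2 + (3+e)))"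
      using eq1 by (rule arg_cong)
    also have "\<dots> = bitcount 3 + (bitcount 2 + bitcount (3+e))"
      using bc_add[OF r2, of 3] bc_add[OF r1, of 2] by simp
    finally have b1: "bitcount (24*P+26+e+(192*P*P + 376*P + 185)) = 3 + bitcount (3+e)"
      using bc_nums by simp
    have r3: "2+e < (2::nat)^\<alpha>" using N e by simp
    have eq2: "24*P+26+e = 2^\<alpha>*3 + (2+e)" using N by simp
    have "bitcount (24*P+26+e) = bitcount (2^\<alpha>*3 + (2+e))" using eq2 by (rule arg_cong)
    also have "\<dots> = bitcount 3 + bitcount (2+e)" using bc_add[OF r3, of 3] by simp
    finally have b2: "bitcount (24*P+26+e) = 2 + bitcount (2+e)" using bc_nums by simp
    show "bitcount (24*P+26+e+(192*P*P + 376*P + 185)) mod 2 = bitcount (24*P+26+e) mod 2"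
    proof -
      have "e = 0 \<or> e = 1 \<or> e = 2" using e by arith
      thus ?thesis unfolding b1 b2 using bc_nums by (elim disjE) simp_all
    qed
  qed
  thus ?thesis unfolding M K .
qed


lemma famC_even:
  fixes w :: nat
  shows "Gamma (2^(2*w+4) + 2) \<ge> enat (5 * 2^(2*w+4-1) - 8 * 1 + 1)"
proof -
  obtain P :: nat where G: "2^(2*w) = P+1"
    by (cases "(2::nat)^(2*w)") simp_all
  have R: "(2::nat)^(2*w+4) = 16*(P+1)" using G by (simp add: power_add)
  have R1: "(2::nat)^(2*w+4-1) = 8*(P+1)" using G by (simp add: power_add)
  have M: "5 * 2^(2*w+4-1) - 8 * 1 + 1 = 40*P + (33::nat)" using R1 by simp
  have K: "2^(2*w+4) + 2 = 16*P + (18::nat)" using R by simp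
  have "Gamma (16*P + 18) \<ge> enat (40*P + 33)"
  proof (rule gamma_ge[where i="1" and j="1+2^(2*w+4)" and s="2*w+4" and qz="2"])
    show "1 < 1 + (2::nat)^(2*w+4)" by simp
    show "1 + 2^(2*w+4) < 16*P + (18::nat)" using R by simp
    show "1 + 2^(2*w+4) = 1 + (2::nat)^(2*w+4)" by simp
    show "odd (40*P + (33::nat))" by simp
    show "2 * 2^(2*w+4) \<le> 1 * (40*P + (33::nat))" using R by simp
    show "1 * (40*P + 33) + (40*P + 33) \<le> (2+3) * (2::nat)^(2*w+4)" using R by simp
    fix e :: nat assume e: "e < 3"
    have r1: "3+e < (2::nat)^3" using e by simp
    have r2: "2^3*(2^(2*w) - 1) + (3+e) < (2::nat)^(2*w+5)" using G e by (simp add: power_add)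
    have eq1: "2+e+(40*P+33) = 2^(2*w+5)*1 + (2^3*(2^(2*w) - 1) + (3+e))"
      using G by (simp add: power_add)
    have "bitcount (2+e+(40*P+33)) = bitcount (2^(2*w+5)*1 + (2^3*(2^(2*w) - 1) + (3+e)))"
      using eq1 by (rule arg_cong)
    also have "\<dots> = bitcount 1 + (bitcount (2^(2*w) - 1) + bitcount (3+e))"
      using bc_add[OF r2, of 1] bc_add[OF r1, of "2^(2*w) - 1"] by simp
    finally have b1: "bitcount (2+e+(40*P+33)) = 1 + 2*w + bitcount (3+e)"
      using bc_pow_minus1 bc_nums by simp
    show "bitcount (2+e+(40*P+33)) mod 2 = bitcount (2+e) mod 2"
    proof -
      have "e = 0 \<or> e = 1 \<or> e = 2" using e by arith
      thus ?thesis unfolding b1 using bc_nums by (elim disjE) simp_all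
    qed
  qed
  thus ?thesis unfolding M K .
qed

lemma famC_odd:
  fixes w :: nat
  shows "Gamma (2^(2*w+5) + 2) \<ge> enat (5 * 2^(2*w+5-1) - 8 * 2 + 1)"
proof -
  obtain P :: nat where G: "2^(2*w) = P+1"
    by (cases "(2::nat)^(2*w)") simp_all
  have R: "(2::nat)^(2*w+5) = 32*(P+1)" using G by (simp add: power_add)
  have R1: "(2::nat)^(2*w+5-1) = 16*(P+1)" using G by (simp add: power_add)
  have M: "5 * 2^(2*w+5-1) - 8 * 2 + 1 = 80*P + (65::nat)" using R1 by simp
  have K: "2^(2*w+5) + 2 = 32*P + (34::nat)" using R by simp
  have "Gamma (32*P + 34) \<ge> enat (80*P + 65)"
  proof (rule gamma_ge[where i="1" and j="1+2^(2*w+5)" and s="2*w+5" and qz="2"])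
    show "1 < 1 + (2::nat)^(2*w+5)" by simp
    show "1 + 2^(2*w+5) < 32*P + (34::nat)" using R by simp
    show "1 + 2^(2*w+5) = 1 + (2::nat)^(2*w+5)" by simp
    show "odd (80*P + (65::nat))" by simp
    show "2 * 2^(2*w+5) \<le> 1 * (80*P + (65::nat))" using R by simp
    show "1 * (80*P + 65) + (80*P + 65) \<le> (2+3) * (2::nat)^(2*w+5)" using R by simp
    fix e :: nat assume e: "e < 3"
    have r1: "3+e < (2::nat)^4" using e by simp
    have r2: "2^4*(2^(2*w) - 1) + (3+e) < (2::nat)^(2*w+6)" using G e by (simp add: power_add)
    have eq1: "2+e+(80*P+65) = 2^(2*w+6)*1 + (2^4*(2^(2*w) - 1) + (3+e))"
      using G by (simp add: power_add)
    have "bitcount (2+e+(80*P+65)) = bitcount (2^(2*w+6)*1 + (2^4*(2^(2*w) - 1) + (3+e)))"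
      using eq1 by (rule arg_cong)
    also have "\<dots> = bitcount 1 + (bitcount (2^(2*w) - 1) + bitcount (3+e))"
      using bc_add[OF r2, of 1] bc_add[OF r1, of "2^(2*w) - 1"] by simp
    finally have b1: "bitcount (2+e+(80*P+65)) = 1 + 2*w + bitcount (3+e)"
      using bc_pow_minus1 bc_nums by simp
    show "bitcount (2+e+(80*P+65)) mod 2 = bitcount (2+e) mod 2"
    proof -
      have "e = 0 \<or> e = 1 \<or> e = 2" using e by arith
      thus ?thesis unfolding b1 using bc_nums by (elim disjE) simp_all
    qed
  qed
  thus ?thesis unfolding M K .
qed

lemma famB:
  fixes \<beta> :: nat
  assumes "\<beta> \<ge> 9"
  shows "Gamma (2^(2*\<beta>+1) + 3 * 2^(\<beta>+3) + 49) \<ge> enat (3 * 2^(2*\<beta>+1) - 2^(\<beta>-1) + 1)"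
proof -
  obtain P :: nat where H: "2^(\<beta>-1) = 256*P+256"
  proof
    have "\<beta>-1 = 8 + (\<beta>-9)" using assms by simp
    hence "(2::nat)^(\<beta>-1) = 2^8 * 2^(\<beta>-9)" by (metis power_add)
    moreover have "(2::nat)^(\<beta>-9) \<ge> 1" by simp
    ultimately show "2^(\<beta>-1) = 256*(2^(\<beta>-9) - 1) + (256::nat)" by (cases "(2::nat)^(\<beta>-9)") simp_all
  qed
  have e1: "2*\<beta>+1 = (\<beta>-1) + (\<beta>-1) + 3" using assms by simp
  have HH: "(2::nat)^(2*\<beta>+1) = 8*(256*P+256)*(256*P+256)"
    unfolding e1 power_add H by simp
  have e2: "\<beta>+3 = (\<beta>-1) + 4" using assms by simp
  have H16: "(2::nat)^(\<beta>+3) = 16*(256*P+256)"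
    unfolding e2 power_add H by simp
  have M: "3 * 2^(2*\<beta>+1) - 2^(\<beta>-1) + 1 = 1572864*P*P + 3145472*P + (1572609::nat)"
  proof -
    have "3*(8*(256*P+256)*(256*P+256)) = (1572864*P*P + 3145472*P + 1572608) + (256*P+(256::nat))"
      by (simp add: algebra_simps)
    thus ?thesis using H HH by simp
  qed
  have K: "2^(2*\<beta>+1) + 3 * 2^(\<beta>+3) + 49 = 8*(256*P+256)*(256*P+256) + 48*(256*P+256) + (49::nat)"
    using HH H16 by simp
  have "Gamma (8*(256*P+256)*(256*P+256) + 48*(256*P+256) + 49) \<ge> enat (1572864*P*P + 3145472*P + 1572609)"
  proof (rule gamma_ge[where i="16*(256*P+256)+16" and j="16*(256*P+256)+16+2^(2*\<beta>+1)"
        and s="2*\<beta>+1" and qz="48*(256*P+256)+46"])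
    show "16*(256*P+256)+16 < 16*(256*P+256)+16+2^(2*\<beta>+1)" by simp
    show "16*(256*P+256)+16+2^(2*\<beta>+1) < 8*(256*P+256)*(256*P+256) + 48*(256*P+256) + 49"
      using HH by simp
    show "16*(256*P+256)+16+2^(2*\<beta>+1) = 16*(256*P+256)+16 + 2^(2*\<beta>+1)" by simp
    show "odd (1572864*P*P + 3145472*P + (1572609::nat))" by simp
    show "(48*(256*P+256)+46) * 2^(2*\<beta>+1) \<le> (16*(256*P+256)+16) * (1572864*P*P + 3145472*P + 1572609)"
      using HH by (simp add: algebra_simps)
    show "(16*(256*P+256)+16) * (1572864*P*P + 3145472*P + 1572609) + (1572864*P*P + 3145472*P + 1572609)
        \<le> (48*(256*P+256)+46+3) * 2^(2*\<beta>+1)"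
      using HH by (simp add: algebra_simps)
    fix e :: nat assume e: "e < 3"
    have r1: "47+e < (2::nat)^(\<beta>-1)" using H e by simp
    have r2: "2^(\<beta>-1)*47 + (47+e) < (2::nat)^(2*\<beta>+1)" using H HH e by (simp add: algebra_simps)
    have eq1: "48*(256*P+256)+46+e+(1572864*P*P + 3145472*P + 1572609) = 2^(2*\<beta>+1)*3 + (2^(\<beta>-1)*47 + (47+e))"
      using H HH by (simp add: algebra_simps)
    have "bitcount (48*(256*P+256)+46+e+(1572864*P*P + 3145472*P + 1572609)) = bitcount (2^(2*\<beta>+1)*3 + (2^(\<beta>-1)*47 + (47+e)))"
      using eq1 by (rule arg_cong)
    also have "\<dots> = bitcount 3 + (bitcount 47 + bitcount (47+e))"
      using bc_add[OF r2, of 3] bc_add[OF r1, of 47] by simp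
    finally have b1: "bitcount (48*(256*P+256)+46+e+(1572864*P*P + 3145472*P + 1572609)) = 7 + bitcount (47+e)"
      using bc_nums by simp
    have r3: "46+e < (2::nat)^(\<beta>+3)" using H16 e by simp
    have eq2: "48*(256*P+256)+46+e = 2^(\<beta>+3)*3 + (46+e)" using H16 by simp
    have "bitcount (48*(256*P+256)+46+e) = bitcount (2^(\<beta>+3)*3 + (46+e))" using eq2 by (rule arg_cong)
    also have "\<dots> = bitcount 3 + bitcount (46+e)" using bc_add[OF r3, of 3] by simp
    finally have b2: "bitcount (48*(256*P+256)+46+e) = 2 + bitcount (46+e)" using bc_nums by simp
    show "bitcount (48*(256*P+256)+46+e+(1572864*P*P + 3145472*P + 1572609)) mod 2 = bitcount (48*(256*P+256)+46+e) mod 2"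
    proof -
      have "e = 0 \<or> e = 1 \<or> e = 2" using e by arith
      thus ?thesis unfolding b1 b2 using bc_nums by (elim disjE) simp_all
    qed
  qed
  thus ?thesis unfolding M K .
qed


theorem lemma2:
  fixes \<alpha> \<beta> \<rho> :: nat
  assumes "\<alpha> \<ge> 3" and "\<beta> \<ge> 9" and "\<rho> \<ge> 4"
  shows "Gamma (2^(2*\<alpha>) + 2^\<alpha> + 2) \<ge> enat (3 * 2^(2*\<alpha>) - 2^\<alpha> + 1) \<and>
         Gamma (2^(2*\<beta>+1) + 3 * 2^(\<beta>+3) + 49) \<ge> enat (3 * 2^(2*\<beta>+1) - 2^(\<beta>-1) + 1) \<and>
         Gamma (2^\<rho> + 2) \<ge> enat (5 * 2^(\<rho>-1) - 8 * (if even \<rho> then 1 else 2) + 1)"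
proof (intro conjI)
  show "Gamma (2^(2*\<alpha>) + 2^\<alpha> + 2) \<ge> enat (3 * 2^(2*\<alpha>) - 2^\<alpha> + 1)"
    using famA assms(1) by blast
  show "Gamma (2^(2*\<beta>+1) + 3 * 2^(\<beta>+3) + 49) \<ge> enat (3 * 2^(2*\<beta>+1) - 2^(\<beta>-1) + 1)"
    using famB assms(2) by blast
  show "Gamma (2^\<rho> + 2) \<ge> enat (5 * 2^(\<rho>-1) - 8 * (if even \<rho> then 1 else 2) + 1)"
  proof (cases "even \<rho>")
    case True
    then obtain w where w: "\<rho> = 2*w+4" using assms(3)
      by (metis add.commute dvd_def le_add_diff_inverse2 numeral_Bit0 numeral_One one_add_one
          distrib_left_numeral dvd_diff_nat dvd_refl even_add)
    have ifv: "(if even \<rho> then 1 else 2) = (1::nat)" using True by simp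
    show ?thesis unfolding ifv unfolding w using famC_even[of w] .
  next
    case False
    have "\<rho> = 2*((\<rho>-5) div 2)+5" using False assms(3) by presburger
    then obtain w where w: "\<rho> = 2*w+5" by blast
    have ifv: "(if even \<rho> then 1 else 2) = (2::nat)" using False by simp
    show ?thesis unfolding ifv unfolding w using famC_odd[of w] .
  qed
qed

end
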